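(* Let $P,Q$ be probability measures on $(\Omega,\mathcal{M})$ and $\tau:\Omega\to[0,\infty]$ measurable. Then (1) $$\log\Big[\int\tau\,dQ\Big]\le\inf_{c>1}\Big\{\frac1c\log\Big[\int\tau^c\,dP\Big]+\frac{1}{c-1}R_{c/(c-1)}(Q\|P)\Big\},$$ with the convention $-\infty+\infty=\infty$; (2) $$\log\Big[\int\tau\,dQ\Big]\ge\sup_{c<1,\,c\ne0}\Big\{\frac1c\log\Big[\int\tau^c\,dP\Big]-\frac{1}{1-c}R_{1/(1-c)}(P\|Q)\Big\},$$ with the convention $\infty-\infty=-\infty$.
   Context: Powers of extended nonnegative reals are $\tau^c=\exp(c\log\tau)$, using the continuous extensions of $\exp$ and $\log$ to the extended reals. Rényi divergence: let $\nu$ be a $\sigma$-finite positive measure with $dP=p\,d\nu$, $dQ=q\,d\nu$. For $\alpha\in(0,1)$, $R_\alpha(Q\|P)=\frac{1}{\alpha(\alpha-1)}\log\int_{p>0}q^\alpha p^{1-\alpha}\,d\nu$; for $\alpha>1$, the same formula if $Q\ll P$ and $R_\alpha(Q\|P)=+\infty$ if $Q\not\ll P$; for $\alpha<0$, $R_\alpha(Q\|P)=R_{1-\alpha}(P\|Q)$. *)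

theory Defs
  imports "HOL-Probability.Probability"
begin

definition elog :: "ennreal \<Rightarrow> ereal" where
  "elog x = (if x = 0 then -\<infinity> else if x = \<infinity> then \<infinity> else ereal (ln (enn2real x)))"

definition eexp :: "ereal \<Rightarrow> ennreal" where
  "eexp y = (case y of ereal r \<Rightarrow> ennreal (exp r) | PInfty \<Rightarrow> \<infinity> | MInfty \<Rightarrow> 0)"

definition epow :: "ennreal \<Rightarrow> real \<Rightarrow> ennreal" where
  "epow t c = eexp (ereal c * elog t)"

text \<open>Renyi divergence R_alpha(Q||P) for orders alpha > 0, alpha \<noteq> 1, where
  dQ = q d\<nu> and dP = p d\<nu>.  (The case alpha < 0 is R_alpha(Q||P) = R_{1-alpha}(P||Q).)\<close>
definition renyi_pos :: "'a measure \<Rightarrow> ('a \<Rightarrow> ennreal) \<Rightarrow> ('a \<Rightarrow> ennreal) \<Rightarrow> real \<Rightarrow> ereal" where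
  "renyi_pos \<nu> q p \<alpha> =
     (if \<alpha> > 1 \<and> \<not> absolutely_continuous (density \<nu> p) (density \<nu> q) then \<infinity>
      else ereal (1 / (\<alpha> * (\<alpha> - 1))) *
             elog (\<integral>\<^sup>+ x. (if p x > 0 then epow (q x) \<alpha> * epow (p x) (1 - \<alpha>) else 0) \<partial>\<nu>))"

definition renyi :: "'a measure \<Rightarrow> ('a \<Rightarrow> ennreal) \<Rightarrow> ('a \<Rightarrow> ennreal) \<Rightarrow> real \<Rightarrow> ereal" where
  "renyi \<nu> q p \<alpha> = (if \<alpha> < 0 then renyi_pos \<nu> p q (1 - \<alpha>) else renyi_pos \<nu> q p \<alpha>)"

definition minus_conv :: "ereal \<Rightarrow> ereal \<Rightarrow> ereal" where
  "minus_conv a b = (if a = \<infinity> \<and> b = \<infinity> then -\<infinity> else a - b)"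

end

theory Submission
  imports Defs
begin

lemma elog_meas[measurable]: "elog \<in> borel_measurable borel"
  unfolding elog_def by measurable

lemma eexp_alt: "eexp y = (if y = \<infinity> then \<infinity> else if y = -\<infinity> then 0 else ennreal (exp (real_of_ereal y)))"
  by (cases y) (auto simp: eexp_def)

lemma eexp_meas[measurable]: "eexp \<in> borel_measurable borel"
  unfolding eexp_alt[abs_def] by measurable

lemma epow_meas[measurable]: "f \<in> borel_measurable M \<Longrightarrow> (\<lambda>x. epow (f x) c) \<in> borel_measurable M"
  unfolding epow_def by measurable

lemma elog_ennreal: "r > 0 \<Longrightarrow> elog (ennreal r) = ereal (ln r)"
  by (simp add: elog_def)

lemma elog_0[simp]: "elog 0 = -\<infinity>" by (simp add: elog_def)
lemma elog_top[simp]: "elog \<top> = \<infinity>" by (simp add: elog_def)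
lemma elog_1[simp]: "elog 1 = 0" by (simp add: elog_def)

lemma eexp_elog: "elog (eexp y) = y"
  by (cases y) (auto simp: eexp_def elog_def)

lemma elog_epow: "elog (epow x c) = ereal c * elog x"
  by (simp add: epow_def eexp_elog)

lemma epow_ennreal: "r > 0 \<Longrightarrow> epow (ennreal r) c = ennreal (r powr c)"
  by (simp add: epow_def elog_ennreal eexp_def powr_def)

lemma epow_0_pos: "c > 0 \<Longrightarrow> epow 0 c = 0"
  by (simp add: epow_def eexp_def)
lemma epow_0_neg: "c < 0 \<Longrightarrow> epow 0 c = \<top>"
  by (simp add: epow_def eexp_def)
lemma epow_top_pos: "c > 0 \<Longrightarrow> epow \<top> c = \<top>"
  by (simp add: epow_def eexp_def)
lemma epow_top_neg: "c < 0 \<Longrightarrow> epow \<top> c = 0"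
  by (simp add: epow_def eexp_def)
lemma epow_1[simp]: "epow 1 c = 1"
  by (simp add: epow_def eexp_def zero_ereal_def)

lemma ennreal_cases3:
  fixes x :: ennreal
  obtains "x = 0" | "x = \<top>" | r where "r > 0" "x = ennreal r"
  proof (cases x)
  case (real r) thus ?thesis using that by (cases "r = 0") auto
qed (use that in auto)

lemma epow_pos_eq0_iff: "c > 0 \<Longrightarrow> epow x c = 0 \<longleftrightarrow> x = 0"
  by (cases x rule: ennreal_cases3) (auto simp: epow_0_pos epow_top_pos epow_ennreal)

lemma elog_mono: "x \<le> y \<Longrightarrow> elog x \<le> elog y"
  by (cases x rule: ennreal_cases3; cases y rule: ennreal_cases3) (auto simp: elog_ennreal top_unique)

lemma elog_mult_le: "elog (x * y) \<le> elog x + elog y"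
proof (cases x rule: ennreal_cases3)
  case 1 thus ?thesis by simp
next
  case 2 thus ?thesis
    by (cases "y = 0") (simp_all add: ennreal_top_mult)
next
  case (3 r)
  show ?thesis
  proof (cases y rule: ennreal_cases3)
    case 1 thus ?thesis by simp
  next
    case 2 thus ?thesis using 3 by (simp add: ennreal_mult_top elog_ennreal)
  next
    case (3 s)
    have "x * y = ennreal (r * s)" using 3 \<open>x = ennreal r\<close> \<open>r > 0\<close> by (simp add: ennreal_mult)
    thus ?thesis using 3 \<open>x = ennreal r\<close> \<open>r > 0\<close> by (simp add: elog_ennreal ln_mult)
  qed
qed

lemma young_real:
  fixes x y a b t :: real
  assumes "0 < t" "t < 1" "a > 0" "b > 0" "x > 0" "y > 0"
  shows "x powr t * y powr (1 - t) \<le> (a powr t * b powr (1 - t)) * (t / a * x + (1 - t) / b * y)"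
proof -
  have "(x/a) powr t * (y/b) powr (1-t) \<le> t * (x/a) + (1-t) * (y/b)"
    using Youngs_inequality_0[of t "1-t" "x/a" "y/b"] assms by auto
  hence "(a powr t * b powr (1 - t)) * ((x/a) powr t * (y/b) powr (1-t))
        \<le> (a powr t * b powr (1 - t)) * (t * (x/a) + (1-t) * (y/b))"
    using assms by (intro mult_left_mono) auto
  moreover have "(a powr t * b powr (1 - t)) * ((x/a) powr t * (y/b) powr (1-t)) = x powr t * y powr (1 - t)"
    using assms by (simp add: powr_divide field_simps)
  ultimately show ?thesis by simp
qed

lemma young_enn:
  fixes x y :: ennreal and a b t :: real
  assumes "0 < t" "t < 1" "a > 0" "b > 0"
  shows "epow x t * epow y (1 - t) \<le> ennreal (a powr t * b powr (1 - t)) * (ennreal (t / a) * x + ennreal ((1 - t) / b) * y)"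
proof (cases x rule: ennreal_cases3)
  case 1 thus ?thesis using assms by (simp add: epow_0_pos)
next
  case 2
  have "ennreal (t / a) * x = \<top>" using 2 assms by (simp add: ennreal_mult_top)
  thus ?thesis using assms by (simp add: ennreal_mult_top)
next
  case (3 r)
  show ?thesis
  proof (cases y rule: ennreal_cases3)
    case 1 thus ?thesis using assms by (simp add: epow_0_pos)
  next
    case 2
    have "ennreal ((1-t) / b) * y = \<top>" using 2 assms by (simp add: ennreal_mult_top)
    thus ?thesis using assms by (simp add: ennreal_mult_top)
  next
    case (3 s)
    have "r powr t * s powr (1 - t) \<le> (a powr t * b powr (1 - t)) * (t / a * r + (1 - t) / b * s)"
      using young_real assms 3 \<open>r > 0\<close> by blast
    moreover have "epow x t * epow y (1 - t) = ennreal (r powr t * s powr (1 - t))"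
      using 3 \<open>x = ennreal r\<close> \<open>r > 0\<close> by (simp add: epow_ennreal ennreal_mult)
    moreover have "ennreal (a powr t * b powr (1 - t)) * (ennreal (t / a) * x + ennreal ((1 - t) / b) * y)
        = ennreal ((a powr t * b powr (1 - t)) * (t / a * r + (1 - t) / b * s))"
      using 3 \<open>x = ennreal r\<close> \<open>r > 0\<close> assms
      by (simp add: ennreal_mult[symmetric] ennreal_plus[symmetric] del: ennreal_plus)
    ultimately show ?thesis by (simp add: ennreal_leI)
  qed
qed

lemma holder_enn:
  fixes F G :: "'a \<Rightarrow> ennreal" and t :: real
  assumes F[measurable]: "F \<in> borel_measurable M" and G[measurable]: "G \<in> borel_measurable M"
    and t: "0 < t" "t < 1"
  shows "(\<integral>\<^sup>+ x. epow (F x) t * epow (G x) (1 - t) \<partial>M)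
         \<le> epow (\<integral>\<^sup>+ x. F x \<partial>M) t * epow (\<integral>\<^sup>+ x. G x \<partial>M) (1 - t)"
proof -
  define A where "A = (\<integral>\<^sup>+ x. F x \<partial>M)"
  define B where "B = (\<integral>\<^sup>+ x. G x \<partial>M)"
  show ?thesis
  proof (cases "A = 0 \<or> B = 0")
    case True
    hence "AE x in M. epow (F x) t * epow (G x) (1 - t) = 0"
    proof
      assume "A = 0"
      hence "AE x in M. F x = 0" unfolding A_def using nn_integral_0_iff_AE[OF F] by simp
      thus ?thesis by eventually_elim (use t in \<open>simp add: epow_0_pos\<close>)
    next
      assume "B = 0"
      hence "AE x in M. G x = 0" unfolding B_def using nn_integral_0_iff_AE[OF G] by simp
      thus ?thesis by eventually_elim (use t in \<open>simp add: epow_0_pos\<close>)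
    qed
    hence "(\<integral>\<^sup>+ x. epow (F x) t * epow (G x) (1 - t) \<partial>M) = 0"
      by (simp add: nn_integral_0_iff_AE)
    thus ?thesis by simp
  next
    case False
    hence A0: "A \<noteq> 0" and B0: "B \<noteq> 0" by auto
    show ?thesis
    proof (cases "A = \<top> \<or> B = \<top>")
      case True
      have "epow A t \<noteq> 0" "epow B (1-t) \<noteq> 0" using A0 B0 t by (auto simp: epow_pos_eq0_iff)
      moreover have "epow A t = \<top> \<or> epow B (1-t) = \<top>" using True t by (auto simp: epow_top_pos)
      ultimately have "epow A t * epow B (1-t) = \<top>" by (auto simp: ennreal_mult_top ennreal_top_mult)
      thus ?thesis unfolding A_def B_def by simp
    next
      case False
      then obtain a b where a: "a > 0" "A = ennreal a" and b: "b > 0" "B = ennreal b"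
        using A0 B0 by (metis ennreal_cases3)
      define K where "K = a powr t * b powr (1 - t)"
      have "(\<integral>\<^sup>+ x. epow (F x) t * epow (G x) (1 - t) \<partial>M)
            \<le> (\<integral>\<^sup>+ x. ennreal K * (ennreal (t / a) * F x + ennreal ((1 - t) / b) * G x) \<partial>M)"
        unfolding K_def by (rule nn_integral_mono) (rule young_enn[OF t a(1) b(1)])
      also have "\<dots> = ennreal K * (ennreal (t / a) * A + ennreal ((1 - t) / b) * B)"
        unfolding A_def B_def
        by (simp add: nn_integral_cmult nn_integral_add)
      also have "ennreal (t / a) * A + ennreal ((1 - t) / b) * B = 1"
        using a b t by (simp flip: ennreal_mult ennreal_plus add: ennreal_1[symmetric] del: ennreal_1)
      also have "ennreal K = epow A t * epow B (1 - t)"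
        using a b unfolding K_def by (simp add: epow_ennreal ennreal_mult)
      finally show ?thesis unfolding A_def B_def by simp
    qed
  qed
qed

lemma holder_log:
  fixes F G :: "'a \<Rightarrow> ennreal" and t :: real
  assumes "F \<in> borel_measurable M" "G \<in> borel_measurable M" "0 < t" "t < 1"
  shows "elog (\<integral>\<^sup>+ x. epow (F x) t * epow (G x) (1 - t) \<partial>M)
         \<le> ereal t * elog (\<integral>\<^sup>+ x. F x \<partial>M) + ereal (1 - t) * elog (\<integral>\<^sup>+ x. G x \<partial>M)"
proof -
  have "elog (\<integral>\<^sup>+ x. epow (F x) t * epow (G x) (1 - t) \<partial>M)
      \<le> elog (epow (\<integral>\<^sup>+ x. F x \<partial>M) t * epow (\<integral>\<^sup>+ x. G x \<partial>M) (1 - t))"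
    by (rule elog_mono[OF holder_enn[OF assms]])
  also have "\<dots> \<le> elog (epow (\<integral>\<^sup>+ x. F x \<partial>M) t) + elog (epow (\<integral>\<^sup>+ x. G x \<partial>M) (1 - t))"
    by (rule elog_mult_le)
  finally show ?thesis by (simp only: elog_epow)
qed

lemma dens_prob:
  assumes [measurable]: "p \<in> borel_measurable \<nu>" and "prob_space (density \<nu> p)"
  shows "(\<integral>\<^sup>+ x. p x \<partial>\<nu>) = 1" "AE x in \<nu>. p x \<noteq> \<top>"
proof -
  have "emeasure (density \<nu> p) (space \<nu>) = 1"
    using prob_space.emeasure_space_1[OF assms(2)] by simp
  also have "emeasure (density \<nu> p) (space \<nu>) = (\<integral>\<^sup>+ x. p x * indicator (space \<nu>) x \<partial>\<nu>)"
    by (rule emeasure_density) auto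
  also have "\<dots> = (\<integral>\<^sup>+ x. p x \<partial>\<nu>)"
    by (rule nn_integral_cong) auto
  finally show 1: "(\<integral>\<^sup>+ x. p x \<partial>\<nu>) = 1" .
  show "AE x in \<nu>. p x \<noteq> \<top>"
    using nn_integral_PInf_AE[of p \<nu>] 1 by simp
qed

lemma ac_AE:
  assumes [measurable]: "p \<in> borel_measurable \<nu>" "q \<in> borel_measurable \<nu>"
    and "absolutely_continuous (density \<nu> p) (density \<nu> q)"
  shows "AE x in \<nu>. q x > 0 \<longrightarrow> p x > 0"
proof -
  have h: "AE x in density \<nu> p. p x > 0" by (simp add: AE_density)
  have "AE x in density \<nu> q. p x > 0"
    using absolutely_continuous_AE[OF _ assms(3) h] by simp
  thus ?thesis by (simp add: AE_density)
qed

lemma powr2_pow: "(s::real) > 0 \<Longrightarrow> r > 0 \<Longrightarrow> (s powr a * r powr b) powr e = s powr (a*e) * r powr (b*e)"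
  by (simp add: powr_mult powr_powr)

lemma pw1:
  fixes p q t :: ennreal and c :: real
  assumes c: "c > 1" and p: "p \<noteq> \<top>" and q: "q \<noteq> \<top>" and pq: "q > 0 \<longrightarrow> p > 0"
  shows "q * t \<le> epow (p * epow t c) (1/c) *
           epow (if p > 0 then epow q (c/(c-1)) * epow p (1 - c/(c-1)) else 0) (1 - 1/c)"
proof (cases p rule: ennreal_cases3)
  case 1 thus ?thesis using pq by simp
next
  case 2 thus ?thesis using p by simp
next
  case (3 r)
  show ?thesis
  proof (cases q rule: ennreal_cases3)
    case 1 thus ?thesis by simp
  next
    case 2 thus ?thesis using q by simp
  next
    case (3 s)
    have G: "epow q (c/(c-1)) * epow p (1 - c/(c-1)) = ennreal (s powr (c/(c-1)) * r powr (1 - c/(c-1)))"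
      using 3 \<open>r > 0\<close> \<open>p = ennreal r\<close> by (simp add: epow_ennreal ennreal_mult)
    have Gpos: "s powr (c/(c-1)) * r powr (1 - c/(c-1)) > 0" using 3 \<open>r > 0\<close> by simp
    have c1: "1 - 1/c > 0" "1/c > 0" using c by (auto simp: field_simps)
    show ?thesis
    proof (cases t rule: ennreal_cases3)
      case 1 thus ?thesis by simp
    next
      case 2
      have "p * epow t c = \<top>" using 2 c \<open>r > 0\<close> \<open>p = ennreal r\<close> by (simp add: epow_top_pos ennreal_mult_top)
      hence "epow (p * epow t c) (1/c) = \<top>" using c1 by (simp add: epow_top_pos)
      moreover have "epow (if p > 0 then epow q (c/(c-1)) * epow p (1 - c/(c-1)) else 0) (1 - 1/c) > 0"
        using G Gpos c1 \<open>r > 0\<close> \<open>p = ennreal r\<close> \<open>s > 0\<close> \<open>q = ennreal s\<close> by (simp add: epow_ennreal)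
      ultimately show ?thesis by (simp add: ennreal_top_mult)
    next
      case (3 u)
      have pc: "p * epow t c = ennreal (r * u powr c)" using 3 \<open>r > 0\<close> \<open>p = ennreal r\<close>
        by (simp add: epow_ennreal ennreal_mult)
      have "u * s = (r * u powr c) powr (1/c) * (s powr (c/(c-1)) * r powr (1 - c/(c-1))) powr (1 - 1/c)"
      proof -
        have e1: "(r * u powr c) powr (1/c) = r powr (1/c) * u"
          using c \<open>r>0\<close> 3 by (simp add: powr_mult powr_powr)
        have e2: "(s powr (c/(c-1)) * r powr (1 - c/(c-1))) powr (1 - 1/c) = s * r powr (- (1/c))"
        proof -
          have e: "c/(c-1) * (1 - 1/c) = 1" "(1 - c/(c-1)) * (1 - 1/c) = - (1/c)"
            using c by (auto simp: field_simps)
          have "(s powr (c/(c-1)) * r powr (1 - c/(c-1))) powr (1 - 1/c)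
              = s powr (c/(c-1) * (1 - 1/c)) * r powr ((1 - c/(c-1)) * (1 - 1/c))"
            by (rule powr2_pow[OF \<open>s > 0\<close> \<open>r > 0\<close>])
          also have "\<dots> = s powr 1 * r powr (- (1/c))" by (simp only: e)
          finally show ?thesis using \<open>s > 0\<close> by simp
        qed
        show ?thesis using \<open>r > 0\<close> unfolding e1 e2 by (simp add: powr_minus field_simps)
      qed
      thus ?thesis using 3 \<open>q = ennreal s\<close> \<open>r > 0\<close> \<open>p = ennreal r\<close> \<open>s > 0\<close> G Gpos pc
        by (simp add: epow_ennreal ennreal_mult[symmetric] mult.commute)
    qed
  qed
qed

lemma part1:
  fixes \<nu> :: "'a measure" and p q \<tau> :: "'a \<Rightarrow> ennreal"
  assumes [measurable]: "p \<in> borel_measurable \<nu>" "q \<in> borel_measurable \<nu>" "\<tau> \<in> borel_measurable \<nu>"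
    and P: "prob_space (density \<nu> p)" and Q: "prob_space (density \<nu> q)"
    and c: "c > 1" and ac: "absolutely_continuous (density \<nu> p) (density \<nu> q)"
  shows "elog (\<integral>\<^sup>+ x. \<tau> x \<partial>density \<nu> q)
     \<le> ereal (1/c) * elog (\<integral>\<^sup>+ x. epow (\<tau> x) c \<partial>density \<nu> p)
       + ereal (1 - 1/c) * elog (\<integral>\<^sup>+ x. (if p x > 0 then epow (q x) (c/(c-1)) * epow (p x) (1 - c/(c-1)) else 0) \<partial>\<nu>)"
proof -
  define G where "G x = (if p x > 0 then epow (q x) (c/(c-1)) * epow (p x) (1 - c/(c-1)) else 0)" for x
  have [measurable]: "G \<in> borel_measurable \<nu>" unfolding G_def by measurable
  have c1: "0 < 1/c" "1/c < 1" using c by auto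
  have "(\<integral>\<^sup>+ x. \<tau> x \<partial>density \<nu> q) = (\<integral>\<^sup>+ x. q x * \<tau> x \<partial>\<nu>)"
    by (simp add: nn_integral_density)
  also have "\<dots> \<le> (\<integral>\<^sup>+ x. epow (p x * epow (\<tau> x) c) (1/c) * epow (G x) (1 - 1/c) \<partial>\<nu>)"
  proof (rule nn_integral_mono_AE)
    show "AE x in \<nu>. q x * \<tau> x \<le> epow (p x * epow (\<tau> x) c) (1/c) * epow (G x) (1 - 1/c)"
      using dens_prob(2)[OF assms(1) P] dens_prob(2)[OF assms(2) Q] ac_AE[OF assms(1,2) ac]
    proof eventually_elim
      case (elim x)
      show ?case using pw1[OF c elim(1) elim(2) elim(3), of "\<tau> x"] unfolding G_def by simp
    qed
  qed
  finally have "elog (\<integral>\<^sup>+ x. \<tau> x \<partial>density \<nu> q) \<le> elog (\<integral>\<^sup>+ x. epow (p x * epow (\<tau> x) c) (1/c) * epow (G x) (1 - 1/c) \<partial>\<nu>)"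
    by (rule elog_mono)
  also have "\<dots> \<le> ereal (1/c) * elog (\<integral>\<^sup>+ x. p x * epow (\<tau> x) c \<partial>\<nu>) + ereal (1 - 1/c) * elog (\<integral>\<^sup>+ x. G x \<partial>\<nu>)"
    by (rule holder_log[OF _ _ c1(1) c1(2)]; measurable)
  also have "(\<integral>\<^sup>+ x. p x * epow (\<tau> x) c \<partial>\<nu>) = (\<integral>\<^sup>+ x. epow (\<tau> x) c \<partial>density \<nu> p)"
    by (simp add: nn_integral_density)
  finally show ?thesis unfolding G_def .
qed

lemma pw2:
  fixes p q t :: ennreal and c :: real
  assumes c: "0 < c" "c < 1" and p: "p \<noteq> \<top>" and q: "q \<noteq> \<top>" and pq: "p > 0 \<longrightarrow> q > 0"
  shows "p * epow t c \<le> epow (q * t) c *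
           epow (if q > 0 then epow p (1/(1-c)) * epow q (1 - 1/(1-c)) else 0) (1 - c)"
proof (cases p rule: ennreal_cases3)
  case 1 thus ?thesis by simp
next
  case 2 thus ?thesis using p by simp
next
  case (3 r)
  note rr = 3
  obtain s where s: "s > 0" "q = ennreal s" using pq q rr by (cases q rule: ennreal_cases3) auto
  have G: "epow p (1/(1-c)) * epow q (1 - 1/(1-c)) = ennreal (r powr (1/(1-c)) * s powr (1 - 1/(1-c)))"
    using rr s by (simp add: epow_ennreal ennreal_mult)
  have Gpos: "r powr (1/(1-c)) * s powr (1 - 1/(1-c)) > 0" using rr s by simp
  have c1: "1 - c > 0" using c by auto
  show ?thesis
  proof (cases t rule: ennreal_cases3)
    case 1 thus ?thesis using c by (simp add: epow_0_pos)
  next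
    case 2
    have "q * t = \<top>" using 2 s by (simp add: ennreal_mult_top)
    hence "epow (q * t) c = \<top>" using c by (simp add: epow_top_pos)
    moreover have "epow (if q > 0 then epow p (1/(1-c)) * epow q (1 - 1/(1-c)) else 0) (1 - c) > 0"
      using G Gpos c1 s rr by (simp add: epow_ennreal)
    ultimately show ?thesis by (simp add: ennreal_top_mult)
  next
    case (3 u)
    have e: "1/(1-c) * (1 - c) = 1" "(1 - 1/(1-c)) * (1 - c) = - c"
      using c by (auto simp: field_simps)
    have "(r powr (1/(1-c)) * s powr (1 - 1/(1-c))) powr (1 - c)
        = r powr (1/(1-c) * (1 - c)) * s powr ((1 - 1/(1-c)) * (1 - c))"
      by (rule powr2_pow[OF \<open>r > 0\<close> \<open>s > 0\<close>])
    also have "\<dots> = r * s powr (- c)" using \<open>r > 0\<close> by (simp only: e) simp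
    finally have h: "(r powr (1/(1-c)) * s powr (1 - 1/(1-c))) powr (1 - c) = r * s powr (- c)" .
    have "r * u powr c = (s * u) powr c * (r powr (1/(1-c)) * s powr (1 - 1/(1-c))) powr (1 - c)"
      unfolding h using s \<open>u > 0\<close> by (simp add: powr_mult powr_minus field_simps)
    thus ?thesis using 3 \<open>p = ennreal r\<close> \<open>r > 0\<close> s G Gpos
      by (simp add: epow_ennreal ennreal_mult[symmetric])
  qed
qed

lemma pw3:
  fixes p q t :: ennreal and c :: real
  assumes c: "c < 0" and p: "p \<noteq> \<top>" and q: "q \<noteq> \<top>" and pt: "p > 0 \<longrightarrow> t \<noteq> 0" and qt: "q > 0 \<longrightarrow> t \<noteq> \<top>"
  shows "(if q > 0 then epow p (1/(1-c)) * epow q (1 - 1/(1-c)) else 0)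
          \<le> epow (p * epow t c) (1/(1-c)) * epow (q * t) (1 - 1/(1-c))"
proof (cases q rule: ennreal_cases3)
  case 1 thus ?thesis by simp
next
  case 2 thus ?thesis using q by simp
next
  case (3 s)
  have b: "1/(1-c) > 0" using c by auto
  show ?thesis
  proof (cases p rule: ennreal_cases3)
    case 1 thus ?thesis using b by (simp add: epow_0_pos)
  next
    case 2 thus ?thesis using p by simp
  next
    case (3 r)
    obtain u where u: "u > 0" "t = ennreal u"
      using pt qt \<open>r > 0\<close> \<open>p = ennreal r\<close> \<open>s > 0\<close> \<open>q = ennreal s\<close>
      by (cases t rule: ennreal_cases3) auto
    have e: "c * (1/(1-c)) + (1 - 1/(1-c)) = 0" using c by (auto simp: field_simps)
    have "(r * u powr c) powr (1/(1-c)) * (s * u) powr (1 - 1/(1-c))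
        = r powr (1/(1-c)) * s powr (1 - 1/(1-c)) * u powr (c * (1/(1-c)) + (1 - 1/(1-c)))"
    proof -
      have "(r * u powr c) powr (1/(1-c)) = r powr (1/(1-c)) * u powr (c * (1/(1-c)))"
        using \<open>r > 0\<close> u by (simp add: powr_mult powr_powr)
      moreover have "(s * u) powr (1 - 1/(1-c)) = s powr (1 - 1/(1-c)) * u powr (1 - 1/(1-c))"
        using \<open>s > 0\<close> u by (simp add: powr_mult)
      moreover have "u powr (c * (1/(1-c)) + (1 - 1/(1-c))) = u powr (c * (1/(1-c))) * u powr (1 - 1/(1-c))"
        by (rule powr_add)
      ultimately show ?thesis by simp
    qed
    also have "\<dots> = r powr (1/(1-c)) * s powr (1 - 1/(1-c))" using u by (simp only: e) simp
    finally have h: "(r * u powr c) powr (1/(1-c)) * (s * u) powr (1 - 1/(1-c)) = r powr (1/(1-c)) * s powr (1 - 1/(1-c))" .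
    show ?thesis using \<open>r > 0\<close> \<open>p = ennreal r\<close> \<open>s > 0\<close> \<open>q = ennreal s\<close> u h
      by (simp add: epow_ennreal ennreal_mult[symmetric])
  qed
qed

lemma part2a:
  fixes \<nu> :: "'a measure" and p q \<tau> :: "'a \<Rightarrow> ennreal"
  assumes [measurable]: "p \<in> borel_measurable \<nu>" "q \<in> borel_measurable \<nu>" "\<tau> \<in> borel_measurable \<nu>"
    and P: "prob_space (density \<nu> p)" and Q: "prob_space (density \<nu> q)"
    and c: "0 < c" "c < 1" and ac: "absolutely_continuous (density \<nu> q) (density \<nu> p)"
  shows "elog (\<integral>\<^sup>+ x. epow (\<tau> x) c \<partial>density \<nu> p)
     \<le> ereal c * elog (\<integral>\<^sup>+ x. \<tau> x \<partial>density \<nu> q)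
       + ereal (1 - c) * elog (\<integral>\<^sup>+ x. (if q x > 0 then epow (p x) (1/(1-c)) * epow (q x) (1 - 1/(1-c)) else 0) \<partial>\<nu>)"
proof -
  define G where "G x = (if q x > 0 then epow (p x) (1/(1-c)) * epow (q x) (1 - 1/(1-c)) else 0)" for x
  have [measurable]: "G \<in> borel_measurable \<nu>" unfolding G_def by measurable
  have "(\<integral>\<^sup>+ x. epow (\<tau> x) c \<partial>density \<nu> p) = (\<integral>\<^sup>+ x. p x * epow (\<tau> x) c \<partial>\<nu>)"
    by (simp add: nn_integral_density)
  also have "\<dots> \<le> (\<integral>\<^sup>+ x. epow (q x * \<tau> x) c * epow (G x) (1 - c) \<partial>\<nu>)"
  proof (rule nn_integral_mono_AE)
    show "AE x in \<nu>. p x * epow (\<tau> x) c \<le> epow (q x * \<tau> x) c * epow (G x) (1 - c)"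
      using dens_prob(2)[OF assms(1) P] dens_prob(2)[OF assms(2) Q] ac_AE[OF assms(2,1) ac]
    proof eventually_elim
      case (elim x)
      show ?case using pw2[OF c elim(1) elim(2) elim(3), of "\<tau> x"] unfolding G_def by simp
    qed
  qed
  finally have "elog (\<integral>\<^sup>+ x. epow (\<tau> x) c \<partial>density \<nu> p) \<le> elog (\<integral>\<^sup>+ x. epow (q x * \<tau> x) c * epow (G x) (1 - c) \<partial>\<nu>)"
    by (rule elog_mono)
  also have "\<dots> \<le> ereal c * elog (\<integral>\<^sup>+ x. q x * \<tau> x \<partial>\<nu>) + ereal (1 - c) * elog (\<integral>\<^sup>+ x. G x \<partial>\<nu>)"
    by (rule holder_log[OF _ _ c(1) c(2)]; measurable)
  also have "(\<integral>\<^sup>+ x. q x * \<tau> x \<partial>\<nu>) = (\<integral>\<^sup>+ x. \<tau> x \<partial>density \<nu> q)"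
    by (simp add: nn_integral_density)
  finally show ?thesis unfolding G_def .
qed

lemma int_one_dens:
  assumes [measurable]: "p \<in> borel_measurable \<nu>" and P: "prob_space (density \<nu> p)"
  shows "(\<integral>\<^sup>+ x. 1 \<partial>density \<nu> p) = 1"
  using prob_space.emeasure_space_1[OF P] by simp

lemma emeas_one_dens:
  assumes P: "prob_space (density \<nu> p)"
  shows "emeasure (density \<nu> p) (space \<nu>) = 1"
  using prob_space.emeasure_space_1[OF P] by simp

lemma part2b:
  fixes \<nu> :: "'a measure" and p q \<tau> :: "'a \<Rightarrow> ennreal"
  assumes [measurable]: "p \<in> borel_measurable \<nu>" "q \<in> borel_measurable \<nu>" "\<tau> \<in> borel_measurable \<nu>"
    and P: "prob_space (density \<nu> p)" and Q: "prob_space (density \<nu> q)"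
    and c: "c < 0"
    and A: "(\<integral>\<^sup>+ x. epow (\<tau> x) c \<partial>density \<nu> p) \<noteq> \<top>"
    and B: "(\<integral>\<^sup>+ x. \<tau> x \<partial>density \<nu> q) \<noteq> \<top>"
  shows "elog (\<integral>\<^sup>+ x. (if q x > 0 then epow (p x) (1/(1-c)) * epow (q x) (1 - 1/(1-c)) else 0) \<partial>\<nu>)
     \<le> ereal (1/(1-c)) * elog (\<integral>\<^sup>+ x. epow (\<tau> x) c \<partial>density \<nu> p)
       + ereal (1 - 1/(1-c)) * elog (\<integral>\<^sup>+ x. \<tau> x \<partial>density \<nu> q)"
proof -
  have eA: "(\<integral>\<^sup>+ x. epow (\<tau> x) c \<partial>density \<nu> p) = (\<integral>\<^sup>+ x. p x * epow (\<tau> x) c \<partial>\<nu>)"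
    by (simp add: nn_integral_density)
  have eB: "(\<integral>\<^sup>+ x. \<tau> x \<partial>density \<nu> q) = (\<integral>\<^sup>+ x. q x * \<tau> x \<partial>\<nu>)"
    by (simp add: nn_integral_density)
  have AE1: "AE x in \<nu>. p x * epow (\<tau> x) c \<noteq> \<top>"
    using nn_integral_PInf_AE[of "\<lambda>x. p x * epow (\<tau> x) c" \<nu>] A eA by simp
  have AE2: "AE x in \<nu>. q x * \<tau> x \<noteq> \<top>"
    using nn_integral_PInf_AE[of "\<lambda>x. q x * \<tau> x" \<nu>] B eB by simp
  have b: "0 < 1/(1-c)" "1/(1-c) < 1" using c by (auto simp: field_simps)
  have "(\<integral>\<^sup>+ x. (if q x > 0 then epow (p x) (1/(1-c)) * epow (q x) (1 - 1/(1-c)) else 0) \<partial>\<nu>)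
      \<le> (\<integral>\<^sup>+ x. epow (p x * epow (\<tau> x) c) (1/(1-c)) * epow (q x * \<tau> x) (1 - 1/(1-c)) \<partial>\<nu>)"
  proof (rule nn_integral_mono_AE)
    show "AE x in \<nu>. (if q x > 0 then epow (p x) (1/(1-c)) * epow (q x) (1 - 1/(1-c)) else 0)
       \<le> epow (p x * epow (\<tau> x) c) (1/(1-c)) * epow (q x * \<tau> x) (1 - 1/(1-c))"
      using dens_prob(2)[OF assms(1) P] dens_prob(2)[OF assms(2) Q] AE1 AE2
    proof eventually_elim
      case (elim x)
      show ?case
      proof (rule pw3[OF c elim(1) elim(2)])
        show "p x > 0 \<longrightarrow> \<tau> x \<noteq> 0" using elim(3) c by (auto simp: epow_0_neg ennreal_mult_top split: if_splits)
        show "q x > 0 \<longrightarrow> \<tau> x \<noteq> \<top>" using elim(4) by (auto simp: ennreal_mult_top split: if_splits)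
      qed
    qed
  qed
  hence "elog (\<integral>\<^sup>+ x. (if q x > 0 then epow (p x) (1/(1-c)) * epow (q x) (1 - 1/(1-c)) else 0) \<partial>\<nu>)
      \<le> elog (\<integral>\<^sup>+ x. epow (p x * epow (\<tau> x) c) (1/(1-c)) * epow (q x * \<tau> x) (1 - 1/(1-c)) \<partial>\<nu>)"
    by (rule elog_mono)
  also have "\<dots> \<le> ereal (1/(1-c)) * elog (\<integral>\<^sup>+ x. p x * epow (\<tau> x) c \<partial>\<nu>) + ereal (1 - 1/(1-c)) * elog (\<integral>\<^sup>+ x. q x * \<tau> x \<partial>\<nu>)"
    by (rule holder_log[OF _ _ b(1) b(2)]; measurable)
  finally show ?thesis unfolding eA eB .
qed

lemma coef1: "c > 1 \<Longrightarrow> 1/(c-1) * (1 / (c/(c-1) * (c/(c-1) - 1))) = 1 - 1/(c::real)"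
  by (simp add: field_simps)

lemma coef2: "c \<noteq> 0 \<Longrightarrow> c < 1 \<Longrightarrow> 1/(1-c) * (1 / (1/(1-c) * (1/(1-c) - 1))) = (1 - c)/(c::real)"
  by (simp add: field_simps)

lemma ar2a:
  fixes a b j :: ereal and c :: real
  assumes c: "0 < c" "c < 1" and h: "a \<le> ereal c * b + ereal (1 - c) * j" and j: "j \<noteq> -\<infinity>"
  shows "minus_conv (ereal (1/c) * a) (ereal ((1-c)/c) * j) \<le> b"
proof (cases b)
  case PInf thus ?thesis by simp
next
  case (real b')
  show ?thesis
  proof (cases j)
    case PInf thus ?thesis using c by (cases a) (auto simp: minus_conv_def)
  next
    case MInf thus ?thesis using j by simp
  next
    case (real j')
    show ?thesis
    proof (cases a)
      case (real a')
      have "a' \<le> c * b' + (1 - c) * j'" using h real \<open>b = ereal b'\<close> \<open>j = ereal j'\<close> by simp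
      hence "a' / c - (1-c)/c * j' \<le> b'" using c by (simp add: field_simps)
      thus ?thesis using real \<open>b = ereal b'\<close> \<open>j = ereal j'\<close> by (simp add: minus_conv_def)
    next
      case PInf thus ?thesis using h real \<open>b = ereal b'\<close> \<open>j = ereal j'\<close> by simp
    next
      case MInf thus ?thesis using c \<open>j = ereal j'\<close> by (simp add: minus_conv_def)
    qed
  qed
next
  case MInf
  show ?thesis
  proof (cases j)
    case PInf thus ?thesis using c by (cases a) (auto simp: minus_conv_def)
  next
    case MInf thus ?thesis using j by simp
  next
    case (real j')
    hence "a = -\<infinity>" using h \<open>b = -\<infinity>\<close> c by (cases a) auto
    thus ?thesis using c \<open>j = ereal j'\<close> by (simp add: minus_conv_def)
  qed
qed

lemma ar2b_inf:
  fixes b j :: ereal and c :: real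
  assumes c: "c < 0" and j: "j \<le> 0"
  shows "minus_conv (ereal (1/c) * \<infinity>) (ereal ((1-c)/c) * j) \<le> b"
proof -
  have k: "(1-c)/c < 0" using c by (intro divide_pos_neg) auto
  have "ereal ((1-c)/c) * j \<noteq> -\<infinity>" using k j by (cases j) (auto simp: mult_nonpos_nonpos mult_neg_neg)
  thus ?thesis using c by (cases "ereal ((1-c)/c) * j") (auto simp: minus_conv_def)
qed

lemma ar2b:
  fixes a b j :: ereal and c :: real
  assumes c: "c < 0" and h: "j \<le> ereal (1/(1-c)) * a + ereal (1 - 1/(1-c)) * b" and a: "a \<noteq> \<infinity>"
    and j: "j \<le> 0"
  shows "minus_conv (ereal (1/c) * a) (ereal ((1-c)/c) * j) \<le> b"
proof -
  have k: "(1-c)/c < 0" using c by (intro divide_pos_neg) auto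
  have b1: "0 < 1/(1-c)" "0 < 1 - 1/(1-c)" using c by (auto simp: field_simps)
  show ?thesis
  proof (cases b)
    case PInf thus ?thesis by simp
  next
    case MInf
    hence "j = -\<infinity>" using h a b1 by (cases a; cases j) auto
    thus ?thesis using k by (cases "ereal (1/c) * a") (auto simp: minus_conv_def)
  next
    case (real b')
    show ?thesis
    proof (cases j)
      case MInf thus ?thesis using k by (cases "ereal (1/c) * a") (auto simp: minus_conv_def)
    next
      case PInf thus ?thesis using j by simp
    next
      case (real j')
      show ?thesis
      proof (cases a)
        case (real a')
        have "j' \<le> 1/(1-c) * a' + (1 - 1/(1-c)) * b'" using h real \<open>b = ereal b'\<close> \<open>j = ereal j'\<close> by simp
        hence "(1-c) * j' \<le> (1-c) * (1/(1-c) * a' + (1 - 1/(1-c)) * b')"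
          using c by (intro mult_left_mono) auto
        also have "(1-c) * (1/(1-c) * a' + (1 - 1/(1-c)) * b') = ((1-c) * (1/(1-c))) * a' + ((1-c) * (1 - 1/(1-c))) * b'"
          by (simp only: distrib_left mult.assoc)
        also have "(1-c) * (1/(1-c)) = 1" using c by simp
        also have "(1-c) * (1 - 1/(1-c)) = - c" using c by (simp add: algebra_simps)
        finally have "(1-c) * j' \<le> a' - c * b'" by simp
        hence "a' / c - (1-c)/c * j' \<le> b'" using c by (simp add: field_simps)
        thus ?thesis using real \<open>b = ereal b'\<close> \<open>j = ereal j'\<close> by (simp add: minus_conv_def)
      next
        case PInf thus ?thesis using a by simp
      next
        case MInf thus ?thesis using h b1 \<open>b = ereal b'\<close> \<open>j = ereal j'\<close> by simp
      qed
    qed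
  qed
qed

theorem mainTheorem10:
  fixes \<nu> :: "'a measure" and p q :: "'a \<Rightarrow> ennreal" and \<tau> :: "'a \<Rightarrow> ennreal"
  assumes "sigma_finite_measure \<nu>"
    and "p \<in> borel_measurable \<nu>" and "q \<in> borel_measurable \<nu>"
    and "prob_space (density \<nu> p)" and "prob_space (density \<nu> q)"
    and "\<tau> \<in> borel_measurable \<nu>"
  shows "(elog (\<integral>\<^sup>+ x. \<tau> x \<partial>density \<nu> q)
           \<le> (INF c\<in>{1<..}. ereal (1 / c) * elog (\<integral>\<^sup>+ x. epow (\<tau> x) c \<partial>density \<nu> p)
                              + ereal (1 / (c - 1)) * renyi \<nu> q p (c / (c - 1))))
       \<and> (elog (\<integral>\<^sup>+ x. \<tau> x \<partial>density \<nu> q)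
           \<ge> (SUP c\<in>{c. c < 1 \<and> c \<noteq> 0}.
                 minus_conv (ereal (1 / c) * elog (\<integral>\<^sup>+ x. epow (\<tau> x) c \<partial>density \<nu> p))
                            (ereal (1 / (1 - c)) * renyi \<nu> p q (1 / (1 - c)))))"
proof (intro conjI)
  note M[measurable] = assms(2,3,6)
  note P = assms(4) and Q = assms(5)
  show "elog (\<integral>\<^sup>+ x. \<tau> x \<partial>density \<nu> q)
           \<le> (INF c\<in>{1<..}. ereal (1 / c) * elog (\<integral>\<^sup>+ x. epow (\<tau> x) c \<partial>density \<nu> p)
                              + ereal (1 / (c - 1)) * renyi \<nu> q p (c / (c - 1)))"
  proof (rule INF_greatest)
    fix c :: real assume "c \<in> {1<..}"
    hence c: "c > 1" by simp
    have al: "\<not> c/(c-1) < 0" "c/(c-1) > 1" using c by (auto simp: field_simps)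
    show "elog (\<integral>\<^sup>+ x. \<tau> x \<partial>density \<nu> q) \<le> ereal (1 / c) * elog (\<integral>\<^sup>+ x. epow (\<tau> x) c \<partial>density \<nu> p)
                              + ereal (1 / (c - 1)) * renyi \<nu> q p (c / (c - 1))"
    proof (cases "absolutely_continuous (density \<nu> p) (density \<nu> q)")
      case False
      hence "renyi \<nu> q p (c / (c - 1)) = \<infinity>" using al by (simp add: renyi_def renyi_pos_def)
      thus ?thesis using c by simp
    next
      case True
      have "ereal (1 / (c - 1)) * renyi \<nu> q p (c / (c - 1))
         = ereal (1 - 1/c) * elog (\<integral>\<^sup>+ x. (if p x > 0 then epow (q x) (c/(c-1)) * epow (p x) (1 - c/(c-1)) else 0) \<partial>\<nu>)"
        using al True coef1[OF c] by (simp add: renyi_def renyi_pos_def mult.assoc[symmetric])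
      thus ?thesis using part1[OF M P Q c True] by simp
    qed
  qed
  show "elog (\<integral>\<^sup>+ x. \<tau> x \<partial>density \<nu> q)
           \<ge> (SUP c\<in>{c. c < 1 \<and> c \<noteq> 0}.
                 minus_conv (ereal (1 / c) * elog (\<integral>\<^sup>+ x. epow (\<tau> x) c \<partial>density \<nu> p))
                            (ereal (1 / (1 - c)) * renyi \<nu> p q (1 / (1 - c))))"
  proof (rule SUP_least)
    fix c :: real assume "c \<in> {c. c < 1 \<and> c \<noteq> 0}"
    hence c: "c < 1" "c \<noteq> 0" by auto
    define J where "J = (\<integral>\<^sup>+ x. (if q x > 0 then epow (p x) (1/(1-c)) * epow (q x) (1 - 1/(1-c)) else 0) \<partial>\<nu>)"
    define A where "A = (\<integral>\<^sup>+ x. epow (\<tau> x) c \<partial>density \<nu> p)"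
    define B where "B = (\<integral>\<^sup>+ x. \<tau> x \<partial>density \<nu> q)"
    have b0: "\<not> 1/(1-c) < 0" using c by simp
    show "minus_conv (ereal (1 / c) * elog A) (ereal (1 / (1 - c)) * renyi \<nu> p q (1 / (1 - c))) \<le> elog B"
    proof (cases "c > 0")
      case True
      have b1: "1/(1-c) > 1" using c True by (simp add: field_simps)
      show ?thesis
      proof (cases "absolutely_continuous (density \<nu> q) (density \<nu> p)")
        case False
        hence "renyi \<nu> p q (1/(1-c)) = \<infinity>" using b0 b1 by (simp add: renyi_def renyi_pos_def)
        thus ?thesis using c by (cases "ereal (1 / c) * elog A") (auto simp: minus_conv_def)
      next
        case ac: True
        have "ereal (1 / (1 - c)) * renyi \<nu> p q (1 / (1 - c)) = ereal ((1-c)/c) * elog J"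
          using b0 ac coef2[OF c(2) c(1)] unfolding J_def
          by (simp add: renyi_def renyi_pos_def mult.assoc[symmetric])
        moreover have "elog A \<le> ereal c * elog B + ereal (1 - c) * elog J"
          unfolding A_def B_def J_def by (rule part2a[OF M P Q True c(1) ac])
        moreover have "elog J \<noteq> -\<infinity>"
        proof
          assume "elog J = -\<infinity>"
          moreover have "elog (\<integral>\<^sup>+ x. epow 1 c \<partial>density \<nu> p) \<le> ereal c * elog (\<integral>\<^sup>+ x. 1 \<partial>density \<nu> q) + ereal (1 - c) * elog J"
            unfolding J_def by (rule part2a[OF M(1,2) _ P Q True c(1) ac]) simp
          ultimately show False using int_one_dens[OF M(1) P] int_one_dens[OF M(2) Q] c by simp
        qed
        ultimately show ?thesis using ar2a[OF True c(1)] by simp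
      qed
    next
      case False
      hence cn: "c < 0" using c by simp
      have b1: "\<not> 1/(1-c) > 1" using cn by (simp add: field_simps)
      have R: "ereal (1 / (1 - c)) * renyi \<nu> p q (1 / (1 - c)) = ereal ((1-c)/c) * elog J"
        using b0 b1 coef2[OF c(2) c(1)] unfolding J_def
        by (simp add: renyi_def renyi_pos_def mult.assoc[symmetric])
      have "elog J \<le> ereal (1/(1-c)) * elog (\<integral>\<^sup>+ x. epow 1 c \<partial>density \<nu> p) + ereal (1 - 1/(1-c)) * elog (\<integral>\<^sup>+ x. 1 \<partial>density \<nu> q)"
        unfolding J_def by (rule part2b[OF M(1,2) _ P Q cn]) (simp_all add: int_one_dens[OF M(1) P] int_one_dens[OF M(2) Q] emeas_one_dens[OF P] emeas_one_dens[OF Q])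
      hence j0: "elog J \<le> 0" by (simp add: int_one_dens[OF M(1) P] int_one_dens[OF M(2) Q] emeas_one_dens[OF P] emeas_one_dens[OF Q])
      show ?thesis
      proof (cases "A = \<top>")
        case True
        thus ?thesis unfolding R using ar2b_inf[OF cn j0] by simp
      next
        case Af: False
        show ?thesis
        proof (cases "B = \<top>")
          case True thus ?thesis by simp
        next
          case False
          have "elog J \<le> ereal (1/(1-c)) * elog A + ereal (1 - 1/(1-c)) * elog B"
            unfolding J_def A_def B_def by (rule part2b[OF M P Q cn]) (use Af False in \<open>simp_all add: A_def B_def\<close>)
          moreover have "elog A \<noteq> \<infinity>" using Af by (cases A rule: ennreal_cases3) (auto simp: elog_ennreal)
          ultimately show ?thesis unfolding R using ar2b[OF cn _ _ j0] by simp
        qed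
      qed
    qed
  qed
qed

end
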